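(* Let $T$ be a topologically recurrent continuous linear operator on a real or complex Hausdorff topological vector space $X$ over $\mathbb{K}\in\{\mathbb{R},\mathbb{C}\}$, and let $\mathbb{T}=\{z\in\mathbb{C}:|z|=1\}$. Then: (a) for every $\lambda\in\mathbb{K}\setminus\mathbb{T}$ the operator $T-\lambda I$ has dense range; (b) if $X$ is real, then for every $\lambda\in\mathbb{C}\setminus\mathbb{T}$ the operator $\widetilde T-\lambda I$ has dense range in $\widetilde X$. Consequently, for every polynomial $p$ with coefficients in $\mathbb{K}$ having no roots in $\mathbb{T}$, the operator $p(T)$ has dense range in $X$.
   Context: $T$ is topologically recurrent if for every non-empty open $U\subset X$ there is $n\in\mathbb{N}$ with $T^n(U)\cap U\neq\varnothing$. For a real space $X$, its complexification is $\widetilde X=\{x+iy:x,y\in X\}$, topologically identified with $X\oplus X$, with complex scalar multiplication $(\alpha+i\beta)(x+iy)=(\alpha x-\beta y)+i(\alpha y+\beta x)$, and the complexified operator is $\widetilde T(x+iy)=Tx+iTy$. *)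

theory Defs
  imports "HOL-Analysis.Analysis" "HOL-Computational_Algebra.Polynomial"
begin

text \<open>Hausdorffness is imposed via the type class t2_space on 'a.\<close>
definition tvs :: "('k::{field,topological_space} \<Rightarrow> 'a::{ab_group_add,topological_space} \<Rightarrow> 'a) \<Rightarrow> bool" where
  "tvs sc \<longleftrightarrow> vector_space sc
     \<and> continuous_on UNIV (\<lambda>p::'a \<times> 'a. fst p + snd p)
     \<and> continuous_on UNIV (\<lambda>p::'k \<times> 'a. sc (fst p) (snd p))"

definition cont_lin_op :: "('k::field \<Rightarrow> 'a::{ab_group_add,topological_space} \<Rightarrow> 'a) \<Rightarrow> ('a \<Rightarrow> 'a) \<Rightarrow> bool" where
  "cont_lin_op sc T \<longleftrightarrow> Vector_Spaces.linear sc sc T \<and> continuous_on UNIV T"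

definition top_recurrent :: "('a::topological_space \<Rightarrow> 'a) \<Rightarrow> bool" where
  "top_recurrent T \<longleftrightarrow> (\<forall>U. open U \<and> U \<noteq> {} \<longrightarrow> (\<exists>n::nat. n \<ge> 1 \<and> (T ^^ n) ` U \<inter> U \<noteq> {}))"

definition dense_range :: "('a \<Rightarrow> 'b::topological_space) \<Rightarrow> bool" where
  "dense_range f \<longleftrightarrow> closure (range f) = UNIV"

text \<open>Complexification of a real space X, identified with X \<times> X (product topology).\<close>
definition cplx_scale :: "(real \<Rightarrow> 'a::ab_group_add \<Rightarrow> 'a) \<Rightarrow> complex \<Rightarrow> 'a \<times> 'a \<Rightarrow> 'a \<times> 'a" where
  "cplx_scale sc z v = (sc (Re z) (fst v) - sc (Im z) (snd v), sc (Re z) (snd v) + sc (Im z) (fst v))"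

definition cplx_op :: "('a \<Rightarrow> 'a) \<Rightarrow> 'a \<times> 'a \<Rightarrow> 'a \<times> 'a" where
  "cplx_op T v = (T (fst v), T (snd v))"

definition poly_op :: "('k::comm_ring_1 \<Rightarrow> 'a::ab_group_add \<Rightarrow> 'a) \<Rightarrow> 'k poly \<Rightarrow> ('a \<Rightarrow> 'a) \<Rightarrow> 'a \<Rightarrow> 'a" where
  "poly_op sc p T x = (\<Sum>i\<le>degree p. sc (coeff p i) ((T ^^ i) x))"

end

theory Submission
  imports Defs "HOL-Computational_Algebra.Fundamental_Theorem_Algebra"
begin


lemma tvs_vs: "tvs sc \<Longrightarrow> vector_space sc" by (simp add: tvs_def)

lemma tvs_add_cont:
  fixes sc :: "'k::{field,topological_space} \<Rightarrow> 'a::{ab_group_add,topological_space} \<Rightarrow> 'a"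
    and f g :: "'x::topological_space \<Rightarrow> 'a"
  assumes "tvs sc" "continuous_on UNIV f" "continuous_on UNIV g"
  shows "continuous_on UNIV (\<lambda>x. f x + g x)"
proof -
  have c: "continuous_on UNIV (\<lambda>p::'a \<times> 'a. fst p + snd p)" using assms(1) by (simp add: tvs_def)
  have "continuous_on UNIV ((\<lambda>p::'a \<times> 'a. fst p + snd p) \<circ> (\<lambda>x. (f x, g x)))"
    by (rule continuous_on_compose[OF continuous_on_Pair[OF assms(2,3)]])
       (rule continuous_on_subset[OF c], simp)
  then show ?thesis by (simp add: o_def)
qed

lemma tvs_scale_cont:
  fixes sc :: "'k::{field,topological_space} \<Rightarrow> 'a::{ab_group_add,topological_space} \<Rightarrow> 'a"
    and f :: "'x::topological_space \<Rightarrow> 'k" and g :: "'x \<Rightarrow> 'a"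
  assumes "tvs sc" "continuous_on UNIV f" "continuous_on UNIV g"
  shows "continuous_on UNIV (\<lambda>x. sc (f x) (g x))"
proof -
  have c: "continuous_on UNIV (\<lambda>p::'k \<times> 'a. sc (fst p) (snd p))" using assms(1) by (simp add: tvs_def)
  have "continuous_on UNIV ((\<lambda>p::'k \<times> 'a. sc (fst p) (snd p)) \<circ> (\<lambda>x. (f x, g x)))"
    by (rule continuous_on_compose[OF continuous_on_Pair[OF assms(2,3)]])
       (rule continuous_on_subset[OF c], simp)
  then show ?thesis by (simp add: o_def)
qed

lemma tvs_diff_cont:
  fixes sc :: "'k::{field,topological_space} \<Rightarrow> 'a::{ab_group_add,topological_space} \<Rightarrow> 'a"
    and f g :: "'x::topological_space \<Rightarrow> 'a"
  assumes "tvs sc" "continuous_on UNIV f" "continuous_on UNIV g"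
  shows "continuous_on UNIV (\<lambda>x. f x - g x)"
proof -
  interpret vector_space sc using assms(1) by (simp add: tvs_def)
  have "continuous_on UNIV (\<lambda>x. f x + sc (-1) (g x))"
    by (intro tvs_add_cont[OF assms(1)] tvs_scale_cont[OF assms(1)] assms continuous_on_const)
  then show ?thesis by simp
qed

lemma small_scale:
  fixes sc :: "'k::real_normed_field \<Rightarrow> 'a::{ab_group_add,topological_space} \<Rightarrow> 'a"
  assumes tvs: "tvs sc" and N: "open N" "0 \<in> N"
  shows "\<exists>W. open W \<and> 0 \<in> W \<and> (\<forall>c w. norm c \<le> C \<longrightarrow> w \<in> W \<longrightarrow> sc c w \<in> N)"
proof -
  interpret vector_space sc using tvs by (simp add: tvs_def)
  have c: "continuous_on UNIV (\<lambda>p::'k \<times> 'a. sc (fst p) (snd p))" using tvs by (simp add: tvs_def)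
  define P where "P = (\<lambda>p::'k \<times> 'a. sc (fst p) (snd p)) -` N"
  have "open P" unfolding P_def by (rule open_vimage[OF N(1) c])
  moreover have "(0,0) \<in> P" using N unfolding P_def by simp
  ultimately obtain A B where AB: "open A" "open B" "(0,0) \<in> A \<times> B" "A \<times> B \<subseteq> P"
    by (rule open_prod_elim)
  then obtain \<delta> where d: "\<delta> > 0" "ball 0 \<delta> \<subseteq> A" by (meson SigmaD1 openE)
  define K where "K = max C 1"
  define k where "k = \<delta> / (2*K)"
  have K: "K \<ge> 1" "C \<le> K" unfolding K_def by auto
  have k: "k > 0" unfolding k_def using d K by auto
  define W where "W = (\<lambda>w. sc (of_real (1/k)) w) -` B"
  have "continuous_on UNIV (\<lambda>w. sc (of_real (1/k)) w)"
    by (intro tvs_scale_cont[OF tvs] continuous_on_const continuous_on_id)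
  then have "open W" unfolding W_def by (rule open_vimage[OF AB(2)])
  moreover have "0 \<in> W" unfolding W_def using AB by simp
  moreover have "sc c w \<in> N" if "norm c \<le> C" "w \<in> W" for c w
  proof -
    have "norm (c * of_real k) = norm c * k" using k by (simp add: norm_mult)
    also have "\<dots> \<le> K * k" using that K k by (simp add: mult_right_mono)
    also have "\<dots> < \<delta>" unfolding k_def using K d by (simp add: field_simps)
    finally have "c * of_real k \<in> A" using d by auto
    moreover have "sc (of_real (1/k)) w \<in> B" using that unfolding W_def by simp
    ultimately have "(c * of_real k, sc (of_real (1/k)) w) \<in> P" using AB by auto
    moreover have "sc (c * of_real k) (sc (of_real (1/k)) w) = sc c w"
      using k by (simp add: of_real_divide field_simps)
    ultimately show ?thesis unfolding P_def by (metis vimageE fst_conv snd_conv)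
  qed
  ultimately show ?thesis by blast
qed

lemma add_nbhd:
  fixes sc :: "'k::{field,topological_space} \<Rightarrow> 'a::{ab_group_add,topological_space} \<Rightarrow> 'a"
    and N :: "'a set"
  assumes tvs: "tvs sc" and N: "open N" "0 \<in> N"
  obtains A B where "open A" "open B" "0 \<in> A" "0 \<in> B" "\<And>a b. a \<in> A \<Longrightarrow> b \<in> B \<Longrightarrow> a + b \<in> N"
proof -
  have c: "continuous_on UNIV (\<lambda>p::'a \<times> 'a. fst p + snd p)" using tvs by (simp add: tvs_def)
  define P where "P = (\<lambda>p::'a \<times> 'a. fst p + snd p) -` N"
  have "open P" unfolding P_def by (rule open_vimage[OF N(1) c])
  moreover have "(0,0) \<in> P" using N unfolding P_def by simp
  ultimately obtain A B where AB: "open A" "open B" "(0,0) \<in> A \<times> B" "A \<times> B \<subseteq> P"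
    by (rule open_prod_elim)
  show ?thesis by (rule that[OF AB(1,2)]) (use AB in \<open>auto simp: P_def\<close>)
qed

lemma diff_nbhd:
  fixes sc :: "'k::{field,topological_space} \<Rightarrow> 'a::{ab_group_add,topological_space} \<Rightarrow> 'a"
    and N :: "'a set"
  assumes tvs: "tvs sc" and N: "open N" "0 \<in> N"
  obtains A B where "open A" "open B" "0 \<in> A" "0 \<in> B" "\<And>a b. a \<in> A \<Longrightarrow> b \<in> B \<Longrightarrow> a - b \<in> N"
proof -
  have c: "continuous_on UNIV (\<lambda>p::'a \<times> 'a. fst p - snd p)"
    by (intro tvs_diff_cont[OF tvs] continuous_on_fst continuous_on_snd continuous_on_id)
  define P where "P = (\<lambda>p::'a \<times> 'a. fst p - snd p) -` N"
  have "open P" unfolding P_def by (rule open_vimage[OF N(1) c])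
  moreover have "(0,0) \<in> P" using N unfolding P_def by simp
  ultimately obtain A B where AB: "open A" "open B" "(0,0) \<in> A \<times> B" "A \<times> B \<subseteq> P"
    by (rule open_prod_elim)
  show ?thesis by (rule that[OF AB(1,2)]) (use AB in \<open>auto simp: P_def\<close>)
qed


lemma core:
  fixes sc :: "'k::real_normed_field \<Rightarrow> 'a::{ab_group_add,topological_space} \<Rightarrow> 'a"
    and T Q :: "'a \<Rightarrow> 'a"
  assumes tvs: "tvs sc" and Tc: "continuous_on UNIV T" and T0: "T 0 = 0"
    and rec: "top_recurrent T"
    and H: "\<forall>n\<ge>1. \<exists>c d. norm c \<le> C \<and> norm d \<le> C \<and>
       (\<forall>z. \<exists>z'. z - sc c (T ((T^^n) z - z)) - sc d ((T^^n) z - z) = Q z')"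
  shows "dense_range Q"
proof (rule ccontr)
  interpret vector_space sc using tvs by (simp add: tvs_def)
  assume "\<not> dense_range Q"
  then obtain y where y: "y \<notin> closure (range Q)" unfolding dense_range_def by auto
  define Om where "Om = - closure (range Q)"
  have Om: "open Om" "y \<in> Om" "\<And>z. Q z \<notin> Om" using y closure_subset unfolding Om_def by (auto intro: closure_subset[THEN subsetD])
  define N0 where "N0 = (\<lambda>u. y + u) -` Om"
  have "continuous_on UNIV (\<lambda>u. y + u)"
    by (intro tvs_add_cont[OF tvs] continuous_on_const continuous_on_id)
  then have N0: "open N0" "0 \<in> N0" unfolding N0_def using Om by (auto intro: open_vimage)
  obtain A B where AB: "open A" "open B" "0 \<in> A" "0 \<in> B" "\<And>a b. a \<in> A \<Longrightarrow> b \<in> B \<Longrightarrow> a + b \<in> N0"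
    using add_nbhd[OF tvs N0] by blast
  obtain B1 B2 where B12: "open B1" "open B2" "0 \<in> B1" "0 \<in> B2" "\<And>a b. a \<in> B1 \<Longrightarrow> b \<in> B2 \<Longrightarrow> a + b \<in> B"
    using add_nbhd[OF tvs AB(2,4)] by blast
  obtain V1 where V1: "open V1" "0 \<in> V1" "\<And>c w. norm c \<le> C \<Longrightarrow> w \<in> V1 \<Longrightarrow> sc c w \<in> B1"
    using small_scale[OF tvs B12(1,3), of C] by blast
  obtain V2 where V2: "open V2" "0 \<in> V2" "\<And>c w. norm c \<le> C \<Longrightarrow> w \<in> V2 \<Longrightarrow> sc c w \<in> B2"
    using small_scale[OF tvs B12(2,4), of C] by blast
  define V where "V = V2 \<inter> T -` V1"
  have V: "open V" "0 \<in> V" unfolding V_def using V1 V2 T0 by (auto intro!: open_vimage Tc)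
  obtain D1 D2 where D: "open D1" "open D2" "0 \<in> D1" "0 \<in> D2" "\<And>a b. a \<in> D1 \<Longrightarrow> b \<in> D2 \<Longrightarrow> a - b \<in> V"
    using diff_nbhd[OF tvs V] by blast
  define W where "W = A \<inter> D1 \<inter> D2"
  define U where "U = (\<lambda>x. x - y) -` W"
  have "continuous_on UNIV (\<lambda>x. x - y)"
    by (intro tvs_diff_cont[OF tvs] continuous_on_const continuous_on_id)
  then have "open U" unfolding U_def W_def using AB D
    by (auto intro!: open_vimage)
  have "y \<in> U" unfolding U_def W_def using AB D by auto
  note \<open>open U\<close> this
  with rec obtain n x where n: "n \<ge> 1" "x \<in> U" "(T^^n) x \<in> U"
    unfolding top_recurrent_def by blast
  define w1 where "w1 = x - y"
  define w2 where "w2 = (T^^n) x - y"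
  have w: "w1 \<in> W" "w2 \<in> W" using n unfolding U_def w1_def w2_def by auto
  obtain c d z' where cd: "norm c \<le> C" "norm d \<le> C"
    "x - sc c (T ((T^^n) x - x)) - sc d ((T^^n) x - x) = Q z'"
    using H n(1) by blast
  have e: "(T^^n) x - x = w2 - w1" unfolding w1_def w2_def by simp
  have "w2 - w1 \<in> V" using D w unfolding W_def by auto
  then have "T (w2 - w1) \<in> V1" "w2 - w1 \<in> V2" unfolding V_def by auto
  then have "sc (-c) (T (w2 - w1)) \<in> B1" "sc (-d) (w2 - w1) \<in> B2"
    using V1(3)[of "-c"] V2(3)[of "-d"] cd by simp_all
  then have "sc (-c) (T (w2 - w1)) + sc (-d) (w2 - w1) \<in> B" by (rule B12(5))
  then have "w1 + (sc (-c) (T (w2 - w1)) + sc (-d) (w2 - w1)) \<in> N0" using w unfolding W_def by (intro AB(5)) auto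
  then have "y + (w1 + (sc (-c) (T (w2 - w1)) + sc (-d) (w2 - w1))) \<in> Om" unfolding N0_def by auto
  moreover have "y + (w1 + (sc (-c) (T (w2 - w1)) + sc (-d) (w2 - w1))) = Q z'"
    using cd(3) unfolding e w1_def by (simp add: algebra_simps)
  ultimately show False using Om by auto
qed



lemma lin_hom: "Vector_Spaces.linear s s T \<Longrightarrow> module_hom s s T"
  by (simp add: linear_iff_module_hom)

lemma pow_bound:
  fixes l :: "'k::real_normed_field"
  assumes "norm l \<noteq> 1" "n \<ge> 1"
  shows "norm (l^n - 1) \<ge> \<bar>norm l - 1\<bar>" "l^n \<noteq> 1"
proof -
  let ?r = "norm l"
  have "\<bar>?r^n - 1\<bar> \<ge> \<bar>?r - 1\<bar>"
  proof (cases "?r \<ge> 1")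
    case True
    then have "?r^n \<ge> ?r" using assms(2) by (metis power_increasing power_one_right)
    then show ?thesis using True by simp
  next
    case False
    then have "?r^n \<le> ?r" using assms(2) by (metis power_decreasing power_one_right norm_ge_zero less_eq_real_def not_le)
    moreover have "?r^n \<le> 1" using False by (simp add: power_le_one)
    ultimately show ?thesis using False by simp
  qed
  moreover have "\<bar>norm (l^n) - norm (1::'k)\<bar> \<le> norm (l^n - 1)" by (rule norm_triangle_ineq3)
  ultimately show g: "norm (l^n - 1) \<ge> \<bar>norm l - 1\<bar>" by (simp add: norm_power)
  show "l^n \<noteq> 1" using g assms(1) by auto
qed

lemma part_a:
  fixes sc :: "'k::real_normed_field \<Rightarrow> 'a::{ab_group_add,topological_space} \<Rightarrow> 'a"
  assumes tvs: "tvs sc" and T: "cont_lin_op sc T" and rec: "top_recurrent T" and l: "norm l \<noteq> 1"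
  shows "dense_range (\<lambda>x. T x - sc l x)"
proof -
  interpret vector_space sc using tvs by (simp add: tvs_def)
  interpret L: module_hom sc sc T using T by (simp add: cont_lin_op_def lin_hom)
  define Q where "Q = (\<lambda>x. T x - sc l x)"
  have Qs: "Q (sc a u) = sc a (Q u)" for a u
    unfolding Q_def by (simp add: L.scale scale_right_diff_distrib mult.commute)
  have pw: "\<exists>u. (T^^n) z - sc (l^n) z = Q u" for n z
  proof (induction n)
    case 0
    then show ?case by (intro exI[of _ 0]) (simp add: Q_def)
  next
    case (Suc n)
    then obtain u where u: "(T^^n) z - sc (l^n) z = Q u" by blast
    have "(T^^Suc n) z - sc (l^Suc n) z = T ((T^^n) z - sc (l^n) z) + (T (sc (l^n) z) - sc l (sc (l^n) z))"
      by (simp add: L.diff algebra_simps)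
    also have "\<dots> = Q (T u + sc (l^n) z)" unfolding u by (simp add: Q_def L.add L.diff L.scale algebra_simps)
    finally show ?case by blast
  qed
  define C where "C = 1 / \<bar>norm l - 1\<bar>"
  have H: "\<forall>n\<ge>1. \<exists>c d. norm c \<le> C \<and> norm d \<le> C \<and>
       (\<forall>z. \<exists>z'. z - sc c (T ((T^^n) z - z)) - sc d ((T^^n) z - z) = Q z')"
  proof (intro allI impI)
    fix n :: nat assume n: "n \<ge> 1"
    note pb = pow_bound[OF l n]
    define d where "d = 1 / (l^n - 1)"
    have "norm d \<le> C" unfolding d_def C_def using pb l
      by (simp add: norm_divide divide_simps) 
    moreover have "\<exists>z'. z - sc 0 (T ((T^^n) z - z)) - sc d ((T^^n) z - z) = Q z'" for z
    proof -
      obtain u where u: "(T^^n) z - sc (l^n) z = Q u" using pw by blast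
      have "(T^^n) z - z = Q u + sc (l^n - 1) z" using u by (simp add: algebra_simps)
      then have "z - sc 0 (T ((T^^n) z - z)) - sc d ((T^^n) z - z) = - sc d (Q u)"
        using pb(2) by (simp add: d_def scale_right_distrib)
      also have "\<dots> = Q (sc (-d) u)" using Qs[of "-d" u] by simp
      finally show ?thesis by blast
    qed
    ultimately show "\<exists>c d. norm c \<le> C \<and> norm d \<le> C \<and>
       (\<forall>z. \<exists>z'. z - sc c (T ((T^^n) z - z)) - sc d ((T^^n) z - z) = Q z')"
      using C_def by (intro exI[of _ 0] exI[of _ d]) auto
  qed
  have "dense_range Q"
    by (rule core[OF tvs _ _ rec H]) (use T in \<open>auto simp: cont_lin_op_def\<close>)
  then show ?thesis unfolding Q_def .
qed



lemma coord_mult: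
  fixes l z1 z2 :: complex and u1 v1 u2 v2 :: real
  assumes b: "Im l \<noteq> 0"
    and z1: "Re z1 = u1 * Re l + v1" "Im z1 = u1 * Im l"
    and z2: "Re z2 = u2 * Re l + v2" "Im z2 = u2 * Im l"
  shows "Im (z1*z2) / Im l = 2 * Re l * u1 * u2 + u1 * v2 + v1 * u2"
    "Re (z1*z2) - Im (z1*z2) / Im l * Re l = v1 * v2 - (Re l ^ 2 + Im l ^ 2) * u1 * u2"
proof -
  have i: "Im (z1*z2) = Im l * (2 * Re l * u1 * u2 + u1 * v2 + v1 * u2)"
    using z1 z2 by (simp add: algebra_simps)
  show "Im (z1*z2) / Im l = 2 * Re l * u1 * u2 + u1 * v2 + v1 * u2" using b i by simp
  have q: "Im (z1*z2) / Im l = 2 * Re l * u1 * u2 + u1 * v2 + v1 * u2" using b i by simp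
  show "Re (z1*z2) - Im (z1*z2) / Im l * Re l = v1 * v2 - (Re l ^ 2 + Im l ^ 2) * u1 * u2"
    unfolding q using z1 z2 by (simp add: algebra_simps power2_eq_square)
qed

lemma quad_dense:
  fixes sc :: "real \<Rightarrow> 'a::{ab_group_add,topological_space} \<Rightarrow> 'a"
  assumes tvs: "tvs sc" and T: "cont_lin_op sc T" and rec: "top_recurrent T"
    and l: "cmod l \<noteq> 1" "Im l \<noteq> 0"
  shows "dense_range (\<lambda>x. T (T x) - sc (2 * Re l) (T x) + sc (Re l ^ 2 + Im l ^ 2) x)"
proof -
  interpret vector_space sc using tvs by (simp add: tvs_def)
  interpret L: module_hom sc sc T using T by (simp add: cont_lin_op_def lin_hom)
  define a where "a = Re l"
  define b where "b = Im l"
  define r where "r = a^2 + b^2"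
  define Q where "Q = (\<lambda>x. T (T x) - sc (2 * a) (T x) + sc r x)"
  define cu where "cu = (\<lambda>z::complex. Im z / b)"
  define cv where "cv = (\<lambda>z::complex. Re z - cu z * a)"
  define E where "E = (\<lambda>z x. sc (cu z) (T x) + sc (cv z) x)"
  define rel where "rel = (\<lambda>x y. \<exists>w. x - y = Q w)"
  have b0: "b \<noteq> 0" using l b_def by simp
  have coords: "Re z = cu z * a + cv z" "Im z = cu z * b" for z
    unfolding cv_def cu_def using b0 by auto
  have Qadd: "Q (x + y) = Q x + Q y" for x y unfolding Q_def by (simp add: L.add algebra_simps)
  have Qdiff: "Q (x - y) = Q x - Q y" for x y unfolding Q_def by (simp add: L.diff algebra_simps)
  have Qsc: "Q (sc c x) = sc c (Q x)" for c x unfolding Q_def by (simp add: L.scale algebra_simps scale_left_commute)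
  have QT: "T (Q x) = Q (T x)" for x unfolding Q_def by (simp add: L.add L.diff L.scale)
  have rel_refl: "rel x x" for x unfolding rel_def by (intro exI[of _ 0]) (simp add: Q_def)
  have rel_trans: "rel x y \<Longrightarrow> rel y z \<Longrightarrow> rel x z" for x y z
    unfolding rel_def by (metis Qadd add.commute diff_add_cancel add_diff_eq diff_diff_eq2)
  have rel_sym: "rel x y \<Longrightarrow> rel y x" for x y
    unfolding rel_def by (metis Qdiff minus_diff_eq diff_zero Qdiff[of 0] )
  have rel_E: "rel x y \<Longrightarrow> rel (E z x) (E z y)" for x y z
  proof -
    assume "rel x y"
    then obtain w where w: "x - y = Q w" unfolding rel_def by blast
    have "E z x - E z y = sc (cu z) (T (x - y)) + sc (cv z) (x - y)"
      unfolding E_def by (simp add: L.diff algebra_simps)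
    also have "\<dots> = Q (E z w)" unfolding w E_def by (simp add: QT Qsc Qadd)
    finally show ?thesis unfolding rel_def by blast
  qed
  have E_mult: "rel (E z1 (E z2 x)) (E (z1*z2) x)" for z1 z2 x
  proof -
    note cm = coord_mult[OF l(2) coords(1)[of z1, unfolded a_def b_def] coords(2)[of z1, unfolded a_def b_def]
        coords(1)[of z2, unfolded a_def b_def] coords(2)[of z2, unfolded a_def b_def], folded a_def b_def]
    have e1: "cu (z1*z2) = 2 * a * cu z1 * cu z2 + cu z1 * cv z2 + cv z1 * cu z2"
      using cm(1) unfolding cu_def by simp
    have e2: "cv (z1*z2) = cv z1 * cv z2 - r * cu z1 * cu z2"
      using cm(2) unfolding cv_def cu_def r_def by simp
    have "E z1 (E z2 x) - E (z1*z2) x = Q (sc (cu z1 * cu z2) x)"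
      unfolding E_def e1 e2 Qsc unfolding Q_def
      by (simp add: L.add L.scale algebra_simps scale_left_commute)
    then show ?thesis unfolding rel_def by blast
  qed
  have E_l: "E l x = T x" for x
    unfolding E_def cu_def cv_def a_def b_def using b0 b_def by simp
  have E_1: "E 1 x = x" for x unfolding E_def cu_def cv_def by simp
  have E_m1: "E (z - 1) x = E z x - x" for z x
    unfolding E_def cu_def cv_def by (simp add: algebra_simps)
  have E_pow: "rel (E (l^n) x) ((T^^n) x)" for n x
  proof (induction n)
    case 0 then show ?case by (simp add: E_1 rel_refl)
  next
    case (Suc n)
    have "rel (E (l * l^n) x) (E l (E (l^n) x))" by (rule rel_sym[OF E_mult])
    moreover have "rel (E l (E (l^n) x)) (E l ((T^^n) x))" by (rule rel_E[OF Suc])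
    ultimately show ?case by (simp add: E_l) (rule rel_trans)
  qed
  define C where "C = (1 / \<bar>cmod l - 1\<bar>) * (1 + (1 + \<bar>a\<bar>) / \<bar>b\<bar>)"
  have H: "\<forall>n\<ge>1. \<exists>c d. norm c \<le> C \<and> norm d \<le> C \<and>
       (\<forall>z. \<exists>z'. z - sc c (T ((T^^n) z - z)) - sc d ((T^^n) z - z) = Q z')"
  proof (intro allI impI)
    fix n :: nat assume n: "n \<ge> 1"
    note pb = pow_bound[OF l(1) n]
    define m where "m = 1 / (l^n - 1)"
    have mm: "m * (l^n - 1) = 1" unfolding m_def using pb(2) by simp
    have nm: "cmod m \<le> 1 / \<bar>cmod l - 1\<bar>" unfolding m_def using pb l
      by (simp add: norm_divide divide_simps)
    have K: "1 \<le> 1 + (1 + \<bar>a\<bar>) / \<bar>b\<bar>" "0 \<le> 1 / \<bar>cmod l - 1\<bar>" by auto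
    have "\<bar>cu m\<bar> \<le> cmod m / \<bar>b\<bar>" unfolding cu_def using b0
      by (simp add: abs_Im_le_cmod divide_right_mono abs_divide)
    also have "\<dots> \<le> cmod m * (1 + (1 + \<bar>a\<bar>) / \<bar>b\<bar>)"
      using b0 by (simp add: divide_simps algebra_simps)
    also have "\<dots> \<le> C" unfolding C_def using nm K by (intro mult_right_mono) auto
    finally have c1: "\<bar>cu m\<bar> \<le> C" .
    have "\<bar>cv m\<bar> \<le> cmod m + \<bar>cu m\<bar> * \<bar>a\<bar>" unfolding cv_def
      using abs_Re_le_cmod[of m] abs_triangle_ineq4[of "Re m" "cu m * a"] by (simp add: abs_mult)
    also have "\<dots> \<le> cmod m + cmod m / \<bar>b\<bar> * \<bar>a\<bar>" using \<open>\<bar>cu m\<bar> \<le> cmod m / \<bar>b\<bar>\<close>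
      using mult_right_mono[OF \<open>\<bar>cu m\<bar> \<le> cmod m / \<bar>b\<bar>\<close>, of "\<bar>a\<bar>"] by simp
    also have "\<dots> \<le> cmod m * (1 + (1 + \<bar>a\<bar>) / \<bar>b\<bar>)"
      using b0 by (simp add: divide_simps algebra_simps)
    also have "\<dots> \<le> C" unfolding C_def using nm K by (intro mult_right_mono) auto
    finally have c2: "\<bar>cv m\<bar> \<le> C" .
    have "\<exists>z'. z - sc (cu m) (T ((T^^n) z - z)) - sc (cv m) ((T^^n) z - z) = Q z'" for z
    proof -
      have "rel (E (l^n - 1) z) ((T^^n) z - z)"
        using E_pow[of n z] unfolding E_m1 rel_def by (simp add: algebra_simps)
      then have "rel (E m (E (l^n - 1) z)) (E m ((T^^n) z - z))" by (rule rel_E)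
      moreover have "rel (E m (E (l^n - 1) z)) z" using E_mult[of m "l^n - 1" z] by (simp add: mm E_1)
      ultimately have "rel z (E m ((T^^n) z - z))" by (meson rel_sym rel_trans)
      then show ?thesis unfolding rel_def E_def by (simp add: algebra_simps)
    qed
    then show "\<exists>c d. norm c \<le> C \<and> norm d \<le> C \<and>
       (\<forall>z. \<exists>z'. z - sc c (T ((T^^n) z - z)) - sc d ((T^^n) z - z) = Q z')"
      using c1 c2 by (intro exI[of _ "cu m"] exI[of _ "cv m"]) auto
  qed
  have "dense_range Q"
    by (rule core[OF tvs _ _ rec H]) (use T in \<open>auto simp: cont_lin_op_def\<close>)
  then show ?thesis unfolding Q_def a_def b_def r_def .
qed



lemma poly_op_ext:
  fixes sc :: "'k::field \<Rightarrow> 'a::ab_group_add \<Rightarrow> 'a"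
  assumes "vector_space sc" "degree p \<le> N"
  shows "poly_op sc p T x = (\<Sum>i\<le>N. sc (coeff p i) ((T^^i) x))"
proof -
  interpret vector_space sc by fact
  show ?thesis unfolding poly_op_def
    by (rule sum.mono_neutral_left) (use assms(2) in \<open>auto simp: not_le intro!: coeff_eq_0\<close>)
qed

lemma poly_op_pCons:
  fixes sc :: "'k::field \<Rightarrow> 'a::ab_group_add \<Rightarrow> 'a"
  assumes vs: "vector_space sc" and lin: "Vector_Spaces.linear sc sc T"
  shows "poly_op sc (pCons a p) T x = sc a x + T (poly_op sc p T x)"
proof -
  interpret vector_space sc by fact
  interpret L: module_hom sc sc T using lin by (simp add: lin_hom)
  have "poly_op sc (pCons a p) T x = (\<Sum>i\<le>Suc (degree p). sc (coeff (pCons a p) i) ((T^^i) x))"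
    by (rule poly_op_ext[OF vs]) (simp add: degree_pCons_le)
  also have "\<dots> = sc a x + (\<Sum>i\<le>degree p. sc (coeff p i) ((T^^Suc i) x))"
    by (subst sum.atMost_Suc_shift) simp
  also have "\<dots> = sc a x + T (poly_op sc p T x)"
    unfolding poly_op_def by (simp add: L.sum L.scale)
  finally show ?thesis .
qed

lemma poly_op_0:
  fixes sc :: "'k::field \<Rightarrow> 'a::ab_group_add \<Rightarrow> 'a"
  assumes vs: "vector_space sc"
  shows "poly_op sc 0 T x = 0"
proof -
  interpret vector_space sc by fact
  show ?thesis unfolding poly_op_def by simp
qed

lemma poly_op_add:
  fixes sc :: "'k::field \<Rightarrow> 'a::ab_group_add \<Rightarrow> 'a"
  assumes vs: "vector_space sc"
  shows "poly_op sc (p + q) T x = poly_op sc p T x + poly_op sc q T x"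
proof -
  interpret vector_space sc by fact
  let ?N = "max (degree p) (degree q)"
  have "degree (p + q) \<le> ?N" by (rule degree_add_le) auto
  then show ?thesis
    by (simp add: poly_op_ext[OF vs, of _ ?N] scale_left_distrib sum.distrib)
qed

lemma poly_op_smult:
  fixes sc :: "'k::field \<Rightarrow> 'a::ab_group_add \<Rightarrow> 'a"
  assumes vs: "vector_space sc"
  shows "poly_op sc (smult a q) T x = sc a (poly_op sc q T x)"
proof -
  interpret vector_space sc by fact
  have "degree (smult a q) \<le> degree q" by (rule degree_smult_le)
  then show ?thesis
    by (simp add: poly_op_ext[OF vs, of _ "degree q"] scale_sum_right)
qed

lemma poly_op_mult:
  fixes sc :: "'k::field \<Rightarrow> 'a::ab_group_add \<Rightarrow> 'a"
  assumes vs: "vector_space sc" and lin: "Vector_Spaces.linear sc sc T"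
  shows "poly_op sc (p * q) T x = poly_op sc p T (poly_op sc q T x)"
proof -
  interpret vector_space sc by fact
  show ?thesis
  proof (induction p)
    case (pCons a p)
    show ?case
      by (simp add: poly_op_add[OF vs] poly_op_smult[OF vs] poly_op_pCons[OF vs lin] pCons.IH)
  qed (simp add: poly_op_0[OF vs])
qed

lemma poly_op_cont:
  fixes sc :: "'k::{field,topological_space} \<Rightarrow> 'a::{ab_group_add,topological_space} \<Rightarrow> 'a"
  assumes tvs: "tvs sc" and T: "cont_lin_op sc T"
  shows "continuous_on UNIV (poly_op sc p T)"
proof (induction p)
  case 0
  then show ?case using poly_op_0[OF tvs_vs[OF tvs]] by (simp add: continuous_on_const)
next
  case (pCons a p)
  have Tc: "continuous_on UNIV T" using T by (simp add: cont_lin_op_def)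
  have "continuous_on UNIV (T \<circ> poly_op sc p T)"
    by (rule continuous_on_compose[OF pCons.IH]) (rule continuous_on_subset[OF Tc], simp)
  then have "continuous_on UNIV (\<lambda>x. sc a x + T (poly_op sc p T x))"
    by (intro tvs_add_cont[OF tvs] tvs_scale_cont[OF tvs] continuous_on_const continuous_on_id)
       (simp add: o_def)
  then show ?case
    using poly_op_pCons[OF tvs_vs[OF tvs], of T a p] T by (simp add: cont_lin_op_def)
qed

lemma dense_comp:
  assumes "continuous_on UNIV f" "dense_range f" "dense_range g"
  shows "dense_range (f \<circ> g)"
proof -
  have "f ` closure (range g) \<subseteq> closure (range (f \<circ> g))"
    using continuous_on_subset[OF assms(1), of "closure (range g)"]
    by (intro image_closure_subset) (auto intro: closure_subset[THEN subsetD])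
  then have "range f \<subseteq> closure (range (f \<circ> g))" using assms(3) unfolding dense_range_def by simp
  then have "closure (range f) \<subseteq> closure (range (f \<circ> g))" by (simp add: closure_minimal)
  then show ?thesis using assms(2) unfolding dense_range_def by auto
qed

lemma poly_op_const_dense:
  fixes sc :: "'k::field \<Rightarrow> 'a::{ab_group_add,topological_space} \<Rightarrow> 'a"
  assumes vs: "vector_space sc" and "degree p = 0" "p \<noteq> 0"
  shows "dense_range (poly_op sc p T)"
proof -
  interpret vector_space sc by fact
  have c: "coeff p 0 \<noteq> 0" using assms(2,3) by (metis leading_coeff_0_iff)
  have "poly_op sc p T x = sc (coeff p 0) x" for x unfolding poly_op_def using assms(2) by simp
  then have "poly_op sc p T (sc (1 / coeff p 0) x) = x" for x using c by simp
  then have "range (poly_op sc p T) = UNIV" by (metis surj_def)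
  then show ?thesis unfolding dense_range_def by simp
qed

lemma poly_op_lin:
  fixes sc :: "'k::field \<Rightarrow> 'a::ab_group_add \<Rightarrow> 'a"
  assumes vs: "vector_space sc" and lin: "Vector_Spaces.linear sc sc T"
  shows "poly_op sc [:-z, 1:] T x = T x - sc z x"
proof -
  interpret vector_space sc by fact
  show ?thesis
    by (simp add: poly_op_pCons[OF vs lin] poly_op_def)
qed

lemma poly_op_quad:
  fixes sc :: "'k::field \<Rightarrow> 'a::ab_group_add \<Rightarrow> 'a"
  assumes vs: "vector_space sc" and lin: "Vector_Spaces.linear sc sc T"
  shows "poly_op sc [:r, -2*a, 1:] T x = T (T x) - sc (2 * a) (T x) + sc r x"
proof -
  interpret vector_space sc by fact
  interpret L: module_hom sc sc T using lin by (simp add: lin_hom)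
  show ?thesis
    by (simp add: poly_op_pCons[OF vs lin] poly_op_def L.add L.scale algebra_simps)
qed



lemma prod_dense:
  fixes G :: "'b \<Rightarrow> 'a::topological_space \<times> 'a"
  assumes "dense_range Q" "\<And>x y. \<exists>v. G v = (Q x, Q y)"
  shows "dense_range G"
proof -
  have "range Q \<times> range Q \<subseteq> range G"
  proof
    fix p assume "p \<in> range Q \<times> range Q"
    then obtain x y where "p = (Q x, Q y)" by auto
    then show "p \<in> range G" using assms(2)[of x y] by (metis rangeI)
  qed
  then have "closure (range Q \<times> range Q) \<subseteq> closure (range G)" by (rule closure_mono)
  then show ?thesis using assms(1) unfolding dense_range_def by (auto simp: closure_Times)
qed

lemma cplx_dense:
  fixes sc :: "real \<Rightarrow> 'a::{ab_group_add,topological_space} \<Rightarrow> 'a"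
  assumes tvs: "tvs sc" and T: "cont_lin_op sc T" and rec: "top_recurrent T" and c: "cmod c \<noteq> 1"
  shows "dense_range (\<lambda>v. cplx_op T v - cplx_scale sc c v)"
proof -
  interpret vector_space sc using tvs by (simp add: tvs_def)
  interpret L: module_hom sc sc T using T by (simp add: cont_lin_op_def lin_hom)
  show ?thesis
  proof (cases "Im c = 0")
    case True
    then have "norm (Re c) \<noteq> 1" using c by (simp add: cmod_def)
    then have d: "dense_range (\<lambda>x. T x - sc (Re c) x)" by (rule part_a[OF tvs T rec])
    show ?thesis
      by (rule prod_dense[OF d]) (use True in \<open>auto simp: cplx_op_def cplx_scale_def\<close>)
  next
    case False
    have d: "dense_range (\<lambda>x. T (T x) - sc (2 * Re c) (T x) + sc (Re c ^ 2 + Im c ^ 2) x)"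
      by (rule quad_dense[OF tvs T rec c False])
    show ?thesis
    proof (rule prod_dense[OF d])
      fix x y
      have two: "sc (r * 2) u = sc r u + sc r u" for r u by (metis mult_2_right scale_left_distrib)
      let ?v = "cplx_op T (x, y) - cplx_scale sc (cnj c) (x, y)"
      show "\<exists>v. cplx_op T v - cplx_scale sc c v =
        (T (T x) - sc (2 * Re c) (T x) + sc (Re c ^ 2 + Im c ^ 2) x,
         T (T y) - sc (2 * Re c) (T y) + sc (Re c ^ 2 + Im c ^ 2) y)"
        by (rule exI[of _ ?v])
          (simp add: cplx_op_def cplx_scale_def L.add L.diff L.scale algebra_simps power2_eq_square two)
    qed
  qed
qed

lemma map_of_real_add: "map_poly complex_of_real (p + q) = map_poly of_real p + map_poly of_real q"
  by (intro poly_eqI) (simp add: coeff_map_poly)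

lemma map_of_real_smult: "map_poly complex_of_real (smult a q) = smult (of_real a) (map_poly of_real q)"
  by (rule map_poly_smult) auto

lemma map_of_real_mult: "map_poly complex_of_real (p * q) = map_poly of_real p * map_poly of_real q"
  by (induction p) (simp_all add: map_of_real_add map_of_real_smult map_poly_pCons)

lemma complex_poly_dense:
  fixes sc :: "complex \<Rightarrow> 'b::{ab_group_add,topological_space} \<Rightarrow> 'b"
  assumes tvs: "tvs sc" and T: "cont_lin_op sc T" and rec: "top_recurrent T"
  shows "(\<forall>z::complex. cmod z = 1 \<longrightarrow> poly p z \<noteq> 0) \<Longrightarrow> dense_range (poly_op sc p T)"
proof (induction "degree p" arbitrary: p rule: less_induct)
  case less
  have vs: "vector_space sc" by (rule tvs_vs[OF tvs])
  have lin: "Vector_Spaces.linear sc sc T" using T by (simp add: cont_lin_op_def)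
  have p0: "p \<noteq> 0" using less.prems by (metis norm_one poly_0)
  show ?case
  proof (cases "degree p = 0")
    case True
    then show ?thesis by (rule poly_op_const_dense[OF vs _ p0])
  next
    case False
    then obtain z where z: "poly p z = 0"
      using fundamental_theorem_of_algebra_alt[of p] by (metis degree_pCons_eq_if)
    then obtain q where q: "p = [:-z, 1:] * q" using poly_eq_0_iff_dvd by (metis dvdE)
    have q0: "q \<noteq> 0" using p0 q by auto
    have "degree p = degree [:-z, 1:] + degree q" unfolding q by (rule degree_mult_eq) (use q0 in auto)
    then have dq: "degree q < degree p" by simp
    have zq: "\<forall>w::complex. cmod w = 1 \<longrightarrow> poly q w \<noteq> 0" using less.prems q by auto
    have zn: "cmod z \<noteq> 1" using less.prems z by auto
    have dlin: "dense_range (poly_op sc [:-z, 1:] T)"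
    proof -
      have "poly_op sc [:-z, 1:] T = (\<lambda>x. T x - sc z x)" by (rule ext) (rule poly_op_lin[OF vs lin])
      then show ?thesis using part_a[OF tvs T rec zn] by simp
    qed
    have "dense_range (poly_op sc [:-z, 1:] T \<circ> poly_op sc q T)"
      by (rule dense_comp[OF poly_op_cont[OF tvs T] dlin less.hyps[OF dq zq]])
    moreover have "poly_op sc p T = poly_op sc [:-z, 1:] T \<circ> poly_op sc q T"
      unfolding q by (rule ext) (simp only: poly_op_mult[OF vs lin] o_apply)
    ultimately show ?thesis by simp
  qed
qed


lemma poly_map_of_real: "poly (map_poly complex_of_real p) (of_real x) = of_real (poly p x)"
  by (simp add: poly_altdef degree_map_poly coeff_map_poly)

lemma real_lin_root:
  fixes t :: "real poly" and z :: complex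
  assumes "degree t \<le> 1" "poly (map_poly complex_of_real t) z = 0" "Im z \<noteq> 0"
  shows "t = 0"
proof -
  have t: "t = [:coeff t 0, coeff t 1:]"
    using assms(1) by (intro poly_eqI) (auto simp: coeff_pCons coeff_eq_0 split: nat.splits)
  have "of_real (coeff t 0) + of_real (coeff t 1) * z = 0"
    using assms(2) by (subst (asm) t) (simp add: map_poly_pCons mult.commute)
  then have "coeff t 1 * Im z = 0" "coeff t 0 + coeff t 1 * Re z = 0"
    by (simp_all add: complex_eq_iff)
  then have "coeff t 1 = 0" "coeff t 0 = 0" using assms(3) by auto
  then show ?thesis by (subst t) simp
qed

lemma real_poly_dense:
  fixes sc :: "real \<Rightarrow> 'a::{ab_group_add,topological_space} \<Rightarrow> 'a"
  assumes tvs: "tvs sc" and T: "cont_lin_op sc T" and rec: "top_recurrent T"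
  shows "(\<forall>z::complex. cmod z = 1 \<longrightarrow> poly (map_poly complex_of_real p) z \<noteq> 0)
           \<Longrightarrow> dense_range (poly_op sc p T)"
proof (induction "degree p" arbitrary: p rule: less_induct)
  case less
  have vs: "vector_space sc" by (rule tvs_vs[OF tvs])
  have lin: "Vector_Spaces.linear sc sc T" using T by (simp add: cont_lin_op_def)
  have p0: "p \<noteq> 0" using less.prems by (metis norm_one poly_0 map_poly_0)
  have dm: "degree (map_poly complex_of_real p) = degree p" by (rule degree_map_poly) simp
  have comp: "poly_op sc (f * g) T = poly_op sc f T \<circ> poly_op sc g T" for f g
    by (rule ext) (simp only: poly_op_mult[OF vs lin] o_apply)
  show ?case
  proof (cases "degree p = 0")
    case True
    then show ?thesis by (rule poly_op_const_dense[OF vs _ p0])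
  next
    case False
    then obtain z where z: "poly (map_poly complex_of_real p) z = 0"
      using fundamental_theorem_of_algebra_alt[of "map_poly complex_of_real p"] dm
      by (metis degree_pCons_eq_if)
    show ?thesis
    proof (cases "Im z = 0")
      case True
      define r where "r = Re z"
      have zr: "z = of_real r" using True unfolding r_def by (simp add: complex_eq_iff)
      have "poly p r = 0" using z unfolding zr poly_map_of_real by simp
      then obtain q where q: "p = [:-r, 1:] * q" using poly_eq_0_iff_dvd by (metis dvdE)
      have q0: "q \<noteq> 0" using p0 q by auto
      have "degree p = degree [:-r, 1:] + degree q" unfolding q by (rule degree_mult_eq) (use q0 in auto)
      then have dq: "degree q < degree p" by simp
      have zq: "\<forall>w::complex. cmod w = 1 \<longrightarrow> poly (map_poly complex_of_real q) w \<noteq> 0"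
        using less.prems unfolding q map_of_real_mult by auto
      have zn: "norm r \<noteq> 1" using less.prems z zr by auto
      have dlin: "dense_range (poly_op sc [:-r, 1:] T)"
      proof -
        have "poly_op sc [:-r, 1:] T = (\<lambda>x. T x - sc r x)" by (rule ext) (rule poly_op_lin[OF vs lin])
        then show ?thesis using part_a[OF tvs T rec zn] by simp
      qed
      have "dense_range (poly_op sc [:-r, 1:] T \<circ> poly_op sc q T)"
        by (rule dense_comp[OF poly_op_cont[OF tvs T] dlin less.hyps[OF dq zq]])
      then show ?thesis unfolding q comp .
    next
      case False
      define a where "a = Re z"
      define b where "b = Im z"
      define q2 where "q2 = [:a^2 + b^2, -2*a, 1:]"
      have dq2: "degree q2 = 2" unfolding q2_def by simp
      have q20: "q2 \<noteq> 0" unfolding q2_def by simp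
      have pq2: "poly (map_poly complex_of_real q2) z = 0"
        unfolding q2_def a_def b_def by (simp add: map_poly_pCons complex_eq_iff power2_eq_square algebra_simps)
      define s where "s = p div q2"
      define t where "t = p mod q2"
      have pst: "p = q2 * s + t" unfolding s_def t_def by (metis div_mult_mod_eq mult.commute)
      have "t = 0 \<or> degree t < degree q2" unfolding t_def using q20 by (rule degree_mod_less)
      then have dt: "degree t \<le> 1" using dq2 by auto
      have "poly (map_poly complex_of_real t) z = 0"
        using z pq2 unfolding pst map_of_real_add map_of_real_mult by simp
      then have "t = 0" using real_lin_root[OF dt] False by simp
      then have ps: "p = q2 * s" using pst by simp
      have s0: "s \<noteq> 0" using p0 ps by auto
      have "degree p = degree q2 + degree s" unfolding ps by (rule degree_mult_eq) (use s0 q20 in auto)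
      then have ds: "degree s < degree p" using dq2 by simp
      have zs: "\<forall>w::complex. cmod w = 1 \<longrightarrow> poly (map_poly complex_of_real s) w \<noteq> 0"
        using less.prems unfolding ps map_of_real_mult by auto
      have zn: "cmod z \<noteq> 1" using less.prems z by auto
      have dq: "dense_range (poly_op sc q2 T)"
      proof -
        have "poly_op sc q2 T = (\<lambda>x. T (T x) - sc (2 * Re z) (T x) + sc (Re z ^ 2 + Im z ^ 2) x)"
          unfolding q2_def a_def b_def by (rule ext) (rule poly_op_quad[OF vs lin])
        then show ?thesis using quad_dense[OF tvs T rec zn False] by simp
      qed
      have "dense_range (poly_op sc q2 T \<circ> poly_op sc s T)"
        by (rule dense_comp[OF poly_op_cont[OF tvs T] dq less.hyps[OF ds zs]])
      then show ?thesis unfolding ps comp .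
    qed
  qed
qed

theorem mainTheorem6:
  fixes scR :: "real \<Rightarrow> 'a::{ab_group_add,t2_space} \<Rightarrow> 'a" and TR :: "'a \<Rightarrow> 'a"
    and scC :: "complex \<Rightarrow> 'b::{ab_group_add,t2_space} \<Rightarrow> 'b" and TC :: "'b \<Rightarrow> 'b"
  shows
   "(tvs scR \<and> cont_lin_op scR TR \<and> top_recurrent TR \<longrightarrow>
        (\<forall>c::real. \<bar>c\<bar> \<noteq> 1 \<longrightarrow> dense_range (\<lambda>x. TR x - scR c x))
      \<and> (\<forall>c::complex. cmod c \<noteq> 1 \<longrightarrow>
            dense_range (\<lambda>v. cplx_op TR v - cplx_scale scR c v))
      \<and> (\<forall>p::real poly. (\<forall>z::complex. cmod z = 1 \<longrightarrow> poly (map_poly complex_of_real p) z \<noteq> 0)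
            \<longrightarrow> dense_range (poly_op scR p TR)))
  \<and> (tvs scC \<and> cont_lin_op scC TC \<and> top_recurrent TC \<longrightarrow>
        (\<forall>c::complex. cmod c \<noteq> 1 \<longrightarrow> dense_range (\<lambda>x. TC x - scC c x))
      \<and> (\<forall>p::complex poly. (\<forall>z::complex. cmod z = 1 \<longrightarrow> poly p z \<noteq> 0)
            \<longrightarrow> dense_range (poly_op scC p TC)))"
proof (intro conjI impI allI)
  assume h: "tvs scR \<and> cont_lin_op scR TR \<and> top_recurrent TR"
  then have tvs: "tvs scR" and T: "cont_lin_op scR TR" and rec: "top_recurrent TR" by auto
  show "dense_range (\<lambda>x. TR x - scR c x)" if "\<bar>c\<bar> \<noteq> 1" for c
    using part_a[OF tvs T rec, of c] that by simp
  show "dense_range (\<lambda>v. cplx_op TR v - cplx_scale scR c v)" if "cmod c \<noteq> 1" for c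
    by (rule cplx_dense[OF tvs T rec that])
  show "dense_range (poly_op scR p TR)"
    if "\<forall>z::complex. cmod z = 1 \<longrightarrow> poly (map_poly complex_of_real p) z \<noteq> 0" for p
    by (rule real_poly_dense[OF tvs T rec that])
next
  assume h: "tvs scC \<and> cont_lin_op scC TC \<and> top_recurrent TC"
  then have tvs: "tvs scC" and T: "cont_lin_op scC TC" and rec: "top_recurrent TC" by auto
  show "dense_range (\<lambda>x. TC x - scC c x)" if "cmod c \<noteq> 1" for c
    using part_a[OF tvs T rec, of c] that by simp
  show "dense_range (poly_op scC p TC)"
    if "\<forall>z::complex. cmod z = 1 \<longrightarrow> poly p z \<noteq> 0" for p
    by (rule complex_poly_dense[OF tvs T rec that])
qed

end
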